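(* Let $v\ge 4$ and $\theta\in[0,1]$, and consider the tipsy cop and drunken robber game on the cycle graph $C_v$. For $1\le i\le\lfloor v/2\rfloor$ and $m\ge 1$ the following hold. If $v$ is even: \[ R_m^i=\begin{cases}\tfrac12 C^{2}_{m-1}, & i=1,\\ \tfrac12 C^{i-1}_{m-1}+\tfrac12 C^{i+1}_{m-1}, & 1<i<v/2,\\ C^{v/2-1}_{m-1}, & i=v/2,\end{cases} \qquad C_m^i=\begin{cases}\tfrac{\theta}{2}R^{2}_{m-1}, & i=1,\\ \left(1-\tfrac{\theta}{2}\right)R^{i-1}_{m-1}+\tfrac{\theta}{2}R^{i+1}_{m-1}, & 1<i<v/2,\\ R^{v/2-1}_{m-1}, & i=v/2.\end{cases} \] If $v$ is odd: \[ R_m^i=\begin{cases}\tfrac12 C^{2}_{m-1}, & i=1,\\ \tfrac12 C^{i-1}_{m-1}+\tfrac12 C^{i+1}_{m-1}, & 1<i<\frac{v-1}{2},\\ \tfrac12 C^{(v-3)/2}_{m-1}+\tfrac12 C^{(v-1)/2}_{m-1}, & i=\frac{v-1}{2},\end{cases} \qquad C_m^i=\begin{cases}\tfrac{\theta}{2}R^{2}_{m-1}, & i=1,\\ \left(1-\tfrac{\theta}{2}\right)R^{i-1}_{m-1}+\tfrac{\theta}{2}R^{i+1}_{m-1}, & 1<i<\frac{v-1}{2},\\ \left(1-\tfrac{\theta}{2}\right)R^{(v-3)/2}_{m-1}+\tfrac{\theta}{2}R^{(v-1)/2}_{m-1}, & i=\frac{v-1}{2}.\end{cases} \]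
   Context: Tipsy cop and drunken robber game on a graph: a cop and a robber occupy distinct vertices and alternate moves; on each move the mover must move to an adjacent vertex (no staying put). The robber always moves to a uniformly random neighbor. The cop, independently at each of her moves, with probability $\theta$ moves to a uniformly random neighbor and with probability $1-\theta$ moves to a neighbor that decreases her distance to the robber (onto the robber if adjacent). All random choices are independent; the robber is captured (game over) as soon as both occupy the same vertex. On the cycle $C_v$, for $1\le i\le \lfloor v/2\rfloor$, $R^i_m$ denotes the probability that, starting with cop and robber at distance $i$ and the robber to move first (then alternating), no capture occurs during the first $m$ moves; $C^i_m$ is the same probability when the cop moves first. By convention $R^i_0=C^i_0=1$. *)

theory Defs
  imports Complex_Main
begin

definition cyc_nbrs :: "nat \<Rightarrow> nat \<Rightarrow> nat set" where
  "cyc_nbrs v x = {(x + 1) mod v, (x + v - 1) mod v}"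

definition cyc_dist :: "nat \<Rightarrow> nat \<Rightarrow> nat \<Rightarrow> nat" where
  "cyc_dist v x y = min ((x + v - y) mod v) ((y + v - x) mod v)"

definition unif_avg :: "'a set \<Rightarrow> ('a \<Rightarrow> real) \<Rightarrow> real" where
  "unif_avg S f = (\<Sum>x\<in>S. f x) / real (card S)"

definition greedy_moves :: "nat \<Rightarrow> nat \<Rightarrow> nat \<Rightarrow> nat set" where
  "greedy_moves v c r = {y \<in> cyc_nbrs v c. cyc_dist v y r < cyc_dist v c r}"

text \<open>surv v \<theta> robber_first m c r: probability that no capture occurs during the
  first m moves, starting with the cop at c and the robber at r, the robber moving
  first iff robber_first is True (then alternating). The robber moves to a uniformly
  random neighbour; the cop with probability \<theta> moves to a uniformly random neighbour,
  and with probability 1-\<theta> to a distance-decreasing neighbour (chosen uniformly among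
  those if there are several; by symmetry the choice does not matter).\<close>
fun surv :: "nat \<Rightarrow> real \<Rightarrow> bool \<Rightarrow> nat \<Rightarrow> nat \<Rightarrow> nat \<Rightarrow> real" where
  "surv v \<theta> b 0 c r = 1"
| "surv v \<theta> True (Suc m) c r =
     unif_avg (cyc_nbrs v r) (\<lambda>r'. if r' = c then 0 else surv v \<theta> False m c r')"
| "surv v \<theta> False (Suc m) c r =
     \<theta> * unif_avg (cyc_nbrs v c) (\<lambda>c'. if c' = r then 0 else surv v \<theta> True m c' r)
   + (1 - \<theta>) * unif_avg (greedy_moves v c r) (\<lambda>c'. if c' = r then 0 else surv v \<theta> True m c' r)"

definition Rprob :: "nat \<Rightarrow> real \<Rightarrow> nat \<Rightarrow> nat \<Rightarrow> real" where
  "Rprob v \<theta> i m = surv v \<theta> True m 0 i"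

definition Cprob :: "nat \<Rightarrow> real \<Rightarrow> nat \<Rightarrow> nat \<Rightarrow> real" where
  "Cprob v \<theta> i m = surv v \<theta> False m 0 i"

end

theory Submission imports Defs begin

lemma modsub_int: "y \<le> v \<Longrightarrow> int ((x + v - y) mod v) = (int x - int y) mod int v"
proof -
  assume "y \<le> v"
  hence "int (x + v - y) = (int x - int y) + int v" by simp
  hence "int ((x + v - y) mod v) = ((int x - int y) + int v) mod int v" by (simp add: of_nat_mod)
  thus ?thesis by simp
qed

lemma small_mod0: "-n < a \<Longrightarrow> a < n \<Longrightarrow> a mod n = 0 \<Longrightarrow> a = (0::int)"
  by (metis mod_neg_neg_trivial mod_pos_pos_trivial nle_le zmod_zminus2_not_zero)

lemma dist_int: "x < v \<Longrightarrow> y < v \<Longrightarrow>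
  int (cyc_dist v x y) = min ((int x - int y) mod int v) ((int y - int x) mod int v)"
  unfolding cyc_dist_def using modsub_int[of y v x] modsub_int[of x v y] by simp

lemma dist_zero: "x < v \<Longrightarrow> y < v \<Longrightarrow> cyc_dist v x y = 0 \<longleftrightarrow> x = y"
proof -
  assume a: "x < v" "y < v"
  have "cyc_dist v x y = 0 \<longleftrightarrow> int (cyc_dist v x y) = 0" by simp
  also have "\<dots> \<longleftrightarrow> (int x - int y) mod int v = 0 \<or> (int y - int x) mod int v = 0"
  proof -
    have p: "0 < int v" using a by simp
    have "0 \<le> (int x - int y) mod int v" "0 \<le> (int y - int x) mod int v" using p by simp_all
    thus ?thesis unfolding dist_int[OF a] by (auto simp: min_def)
  qed
  also have "\<dots> \<longleftrightarrow> x = y"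
  proof
    assume "(int x - int y) mod int v = 0 \<or> (int y - int x) mod int v = 0"
    thus "x = y" using a small_mod0[of "int v" "int x - int y"] small_mod0[of "int v" "int y - int x"] by auto
  qed simp
  finally show ?thesis .
qed

lemma nbrs_sub: "0 < v \<Longrightarrow> cyc_nbrs v x \<subseteq> {..<v}"
  unfolding cyc_nbrs_def by auto

lemma unif_avg_image: "inj_on \<sigma> S \<Longrightarrow> unif_avg (\<sigma> ` S) f = unif_avg S (f \<circ> \<sigma>)"
  unfolding unif_avg_def by (simp add: sum.reindex card_image)

lemma unif_avg_cong: "(\<And>x. x \<in> S \<Longrightarrow> f x = g x) \<Longrightarrow> unif_avg S f = unif_avg S g"
  unfolding unif_avg_def by simp

lemma auto_surv:
  assumes v: "0 < v"
    and rng: "\<And>x. x < v \<Longrightarrow> \<sigma> x < v"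
    and nb: "\<And>x. x < v \<Longrightarrow> cyc_nbrs v (\<sigma> x) = \<sigma> ` cyc_nbrs v x"
    and di: "\<And>x y. x < v \<Longrightarrow> y < v \<Longrightarrow> cyc_dist v (\<sigma> x) (\<sigma> y) = cyc_dist v x y"
  shows "c < v \<Longrightarrow> r < v \<Longrightarrow> surv v \<theta> b m (\<sigma> c) (\<sigma> r) = surv v \<theta> b m c r"
proof (induction m arbitrary: b c r)
  case 0
  then show ?case by simp
next
  case (Suc m)
  have inj: "inj_on \<sigma> {..<v}"
  proof (rule inj_onI)
    fix x y assume "x \<in> {..<v}" "y \<in> {..<v}" "\<sigma> x = \<sigma> y"
    thus "x = y" using di[of x y] dist_zero[of x v y] dist_zero[of "\<sigma> x" v "\<sigma> y"] rng by auto
  qed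
  have injN: "inj_on \<sigma> (cyc_nbrs v x)" for x using inj nbrs_sub[OF v] inj_on_subset by blast
  have eqs: "x < v \<Longrightarrow> y < v \<Longrightarrow> \<sigma> x = \<sigma> y \<longleftrightarrow> x = y" for x y using inj by (auto simp: inj_on_def)
  have gm: "greedy_moves v (\<sigma> c) (\<sigma> r) = \<sigma> ` greedy_moves v c r"
    using Suc.prems nbrs_sub[OF v, of c] unfolding greedy_moves_def nb[OF Suc.prems(1)]
    by (auto simp: di subset_iff)
  have injG: "inj_on \<sigma> (greedy_moves v c r)"
    using injN[of c] unfolding greedy_moves_def by (rule inj_on_subset) auto
  show ?case
  proof (cases b)
    case True
    have "surv v \<theta> b (Suc m) (\<sigma> c) (\<sigma> r) =
      unif_avg (cyc_nbrs v r) (\<lambda>r'. if \<sigma> r' = \<sigma> c then 0 else surv v \<theta> False m (\<sigma> c) (\<sigma> r'))"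
      using True by (simp add: nb[OF Suc.prems(2)] unif_avg_image[OF injN] comp_def)
    also have "\<dots> = surv v \<theta> b (Suc m) c r"
      using True Suc.prems nbrs_sub[OF v, of r]
      by (auto intro!: unif_avg_cong simp: eqs Suc.IH subset_iff)
    finally show ?thesis .
  next
    case False
    have "surv v \<theta> b (Suc m) (\<sigma> c) (\<sigma> r) =
      \<theta> * unif_avg (cyc_nbrs v c) (\<lambda>c'. if \<sigma> c' = \<sigma> r then 0 else surv v \<theta> True m (\<sigma> c') (\<sigma> r))
      + (1 - \<theta>) * unif_avg (greedy_moves v c r) (\<lambda>c'. if \<sigma> c' = \<sigma> r then 0 else surv v \<theta> True m (\<sigma> c') (\<sigma> r))"
      using False by (simp add: nb[OF Suc.prems(1)] gm unif_avg_image[OF injN] unif_avg_image[OF injG] comp_def)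
    also have "\<dots> = surv v \<theta> b (Suc m) c r"
    proof -
      have "unif_avg S (\<lambda>c'. if \<sigma> c' = \<sigma> r then 0 else surv v \<theta> True m (\<sigma> c') (\<sigma> r))
          = unif_avg S (\<lambda>c'. if c' = r then 0 else surv v \<theta> True m c' r)" if "S \<subseteq> cyc_nbrs v c" for S
        using that Suc.prems nbrs_sub[OF v, of c] by (auto intro!: unif_avg_cong simp: eqs Suc.IH subset_iff)
      moreover have "greedy_moves v c r \<subseteq> cyc_nbrs v c" unfolding greedy_moves_def by auto
      ultimately show ?thesis using False by simp
    qed
    finally show ?thesis .
  qed
qed

lemma nbrs_int: "0 < v \<Longrightarrow> cyc_nbrs v x = {nat ((int x + 1) mod int v), nat ((int x - 1) mod int v)}"
proof -
  assume v: "0 < v"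
  have "int ((x + v - 1) mod v) = (int x - 1) mod int v"
    using modsub_int[of 1 v x] v by simp
  hence "(x + v - 1) mod v = nat ((int x - 1) mod int v)"
    by (metis nat_int)
  moreover have "(x + 1) mod v = nat ((int x + 1) mod int v)"
    by (metis nat_int of_nat_1 of_nat_add zmod_int)
  ultimately show ?thesis unfolding cyc_nbrs_def by simp
qed

lemma rot_surv:
  assumes v: "0 < v" and "c < v" "r < v"
  shows "surv v \<theta> b m ((c + k) mod v) ((r + k) mod v) = surv v \<theta> b m c r"
proof (rule auto_surv[where \<sigma>="\<lambda>x. (x + k) mod v", OF v _ _ _ assms(2,3)])
  fix x assume x: "x < v"
  have i: "int ((y + k) mod v) = (int y + int k) mod int v" for y by (simp add: zmod_int)
  show "cyc_nbrs v ((x + k) mod v) = (\<lambda>x. (x + k) mod v) ` cyc_nbrs v x"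
  proof -
    have a: "x + v - 1 = x + (v - 1)" "(x + k) mod v + v - 1 = (x + k) mod v + (v - 1)" using v by auto
    have "((x + 1) mod v + k) mod v = ((x + k) mod v + 1) mod v" by (simp add: mod_simps add_ac)
    moreover have "((x + (v - 1)) mod v + k) mod v = ((x + k) mod v + (v - 1)) mod v" by (simp add: mod_simps add_ac)
    ultimately show ?thesis unfolding cyc_nbrs_def a by auto
  qed
  fix y assume y: "y < v"
  show "cyc_dist v ((x + k) mod v) ((y + k) mod v) = cyc_dist v x y"
    using dist_int[OF x y] dist_int[of "(x + k) mod v" v "(y + k) mod v"] v
    by (simp add: i mod_diff_eq)
qed (simp add: v)

lemma refl_surv:
  assumes v: "0 < v" and "c < v" "r < v"
  shows "surv v \<theta> b m ((v - c) mod v) ((v - r) mod v) = surv v \<theta> b m c r"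
proof (rule auto_surv[where \<sigma>="\<lambda>x. (v - x) mod v", OF v _ _ _ assms(2,3)])
  have i: "y \<le> v \<Longrightarrow> int ((v - y) mod v) = (- int y) mod int v" for y
    using modsub_int[of y v 0] by simp
  have h: "(v - nat (a mod int v)) mod v = nat ((- a) mod int v)" for a
  proof -
    have "a mod int v < int v" using v by simp
    hence le: "nat (a mod int v) \<le> v" by linarith
    have "int ((v - nat (a mod int v)) mod v) = (- (a mod int v)) mod int v"
      using i[OF le] v by simp
    also have "\<dots> = (- a) mod int v" by (simp add: mod_simps)
    finally show ?thesis by (metis nat_int)
  qed
  fix x assume x: "x < v"
  show "cyc_nbrs v ((v - x) mod v) = (\<lambda>x. (v - x) mod v) ` cyc_nbrs v x"
    unfolding nbrs_int[OF v] using x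
    by (auto simp: h i mod_simps)
  fix y assume y: "y < v"
  show "cyc_dist v ((v - x) mod v) ((v - y) mod v) = cyc_dist v x y"
    using dist_int[OF x y] dist_int[of "(v - x) mod v" v "(v - y) mod v"] v x y
    by (simp add: i mod_diff_eq min.commute)
qed (simp add: v)

lemma avg2: "a \<noteq> b \<Longrightarrow> unif_avg {a, b} f = (f a + f b) / 2"
  unfolding unif_avg_def by simp

lemma avg1: "unif_avg {a} f = f a"
  unfolding unif_avg_def by simp

context
  fixes v i :: nat
  assumes v4: "v \<ge> 4" and i1: "1 \<le> i" and iv: "i \<le> v div 2"
begin

lemma nb_i: "cyc_nbrs v i = {i + 1, i - 1}"
proof -
  have "(i + v - 1) mod v = i - 1"
  proof -
    have e: "i + v - 1 = (i - 1) + v" using i1 by simp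
    show ?thesis unfolding e mod_add_self2 using i1 iv v4 by (intro mod_less) linarith
  qed
  moreover have "(i + 1) mod v = i + 1" using iv v4 by simp
  ultimately show ?thesis unfolding cyc_nbrs_def by simp
qed

lemma nb_0: "cyc_nbrs v 0 = {1, v - 1}"
  unfolding cyc_nbrs_def using v4 by simp

lemma rot1: "surv v \<theta> b k 1 i = surv v \<theta> b k 0 (i - 1)"
proof -
  have "surv v \<theta> b k ((1 + (v - 1)) mod v) ((i + (v - 1)) mod v) = surv v \<theta> b k 1 i"
    using v4 iv by (intro rot_surv) auto
  moreover have "(1 + (v - 1)) mod v = 0" using v4 by simp
  moreover have "(i + (v - 1)) mod v = i - 1"
  proof -
    have e: "i + (v - 1) = (i - 1) + v" using i1 v4 by simp
    show ?thesis unfolding e mod_add_self2 using i1 iv v4 by (intro mod_less) linarith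
  qed
  ultimately show ?thesis by simp
qed

lemma rot2: "surv v \<theta> b k (v - 1) i = surv v \<theta> b k 0 (i + 1)"
proof -
  have "surv v \<theta> b k ((v - 1 + 1) mod v) ((i + 1) mod v) = surv v \<theta> b k (v - 1) i"
    using v4 iv by (intro rot_surv) auto
  moreover have "(v - 1 + 1) mod v = 0" using v4 by simp
  moreover have "(i + 1) mod v = i + 1" using iv v4 by simp
  ultimately show ?thesis by simp
qed

lemma dist0: "cyc_dist v 0 i = i"
  unfolding cyc_dist_def using i1 iv v4 by simp

lemma dist1: "cyc_dist v 1 i = i - 1"
proof (cases "i = 1")
  case True thus ?thesis unfolding cyc_dist_def using v4 by simp
next
  case False
  have "(1 + v - i) mod v = v + 1 - i" using False i1 iv v4 by simp
  moreover have "(i + v - 1) mod v = i - 1"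
  proof -
    have e: "i + v - 1 = (i - 1) + v" using i1 by simp
    show ?thesis unfolding e mod_add_self2 using i1 iv v4 by (intro mod_less) linarith
  qed
  ultimately show ?thesis unfolding cyc_dist_def using iv by simp
qed

lemma distv: "cyc_dist v (v - 1) i = min (v - 1 - i) (i + 1)"
proof -
  have "(v - 1 + v - i) mod v = v - 1 - i"
  proof -
    have e: "v - 1 + v - i = (v - 1 - i) + v" using iv v4 by simp
    show ?thesis unfolding e mod_add_self2 using iv v4 by (intro mod_less) linarith
  qed
  moreover have "(i + v - (v - 1)) mod v = i + 1" using iv v4 by simp
  ultimately show ?thesis unfolding cyc_dist_def by simp
qed

lemma greedy: "greedy_moves v 0 i = (if 2 * i = v then {1, v - 1} else {1})"
  unfolding greedy_moves_def nb_0 using dist0 dist1 distv i1 iv v4 by auto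

end

lemma refl0: "0 < d \<Longrightarrow> d < v \<Longrightarrow> surv v \<theta> b k 0 (v - d) = surv v \<theta> b k 0 d"
  using refl_surv[of v 0 d \<theta> b k] by simp

lemma R_step:
  assumes v4: "v \<ge> 4" and i1: "1 \<le> i" and iv: "i \<le> v div 2"
  shows "Rprob v \<theta> i (Suc k) = (if i = 1 then Cprob v \<theta> 2 k / 2
           else (Cprob v \<theta> (i - 1) k + Cprob v \<theta> (i + 1) k) / 2)"
proof -
  have ne: "i + 1 \<noteq> i - 1" by simp
  show ?thesis
  proof (cases "i = 1")
    case True
    hence e: "i + 1 = 2" "i - 1 = 0" by simp_all
    show ?thesis
      unfolding Rprob_def Cprob_def surv.simps nb_i[OF v4 i1 iv] avg2[OF ne] e using True by (simp add: avg2)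
  next
    case False
    thus ?thesis
      unfolding Rprob_def Cprob_def surv.simps nb_i[OF v4 i1 iv] avg2[OF ne]
      using i1 by (auto simp: add.commute)
  qed
qed

lemma C_step:
  assumes v4: "v \<ge> 4" and i1: "1 \<le> i" and iv: "i \<le> v div 2"
  shows "Cprob v \<theta> i (Suc k) =
     \<theta> * (((if i = 1 then 0 else Rprob v \<theta> (i - 1) k) + Rprob v \<theta> (i + 1) k) / 2)
     + (1 - \<theta>) * (if 2 * i = v then (Rprob v \<theta> (i - 1) k + Rprob v \<theta> (i + 1) k) / 2
                      else (if i = 1 then 0 else Rprob v \<theta> (i - 1) k))"
proof -
  have ne: "(1::nat) \<noteq> v - 1" using v4 by simp
  have ne2: "v - 1 \<noteq> i" using v4 iv by simp
  show ?thesis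
  proof (cases "2 * i = v")
    case True
    hence g: "greedy_moves v 0 i = {1, v - 1}" using greedy[OF v4 i1 iv] by simp
    show ?thesis
      unfolding Rprob_def Cprob_def surv.simps nb_0[OF v4 i1 iv] g avg2[OF ne]
      using ne2 rot1[OF v4 i1 iv] rot2[OF v4 i1 iv] i1 v4 True by auto
  next
    case False
    hence g: "greedy_moves v 0 i = {1}" using greedy[OF v4 i1 iv] by simp
    show ?thesis
      unfolding Rprob_def Cprob_def surv.simps nb_0[OF v4 i1 iv] g avg2[OF ne] avg1
      using ne2 rot1[OF v4 i1 iv] rot2[OF v4 i1 iv] i1 v4 False by auto
  qed
qed

theorem mainTheorem6:
  fixes v i m :: nat and \<theta> :: real
  assumes "v \<ge> 4" and "0 \<le> \<theta>" and "\<theta> \<le> 1"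
    and "1 \<le> i" and "i \<le> v div 2" and "m \<ge> 1"
  shows
   "(even v \<longrightarrow>
      Rprob v \<theta> i m =
        (if i = 1 then 1/2 * Cprob v \<theta> 2 (m-1)
         else if i < v div 2 then 1/2 * Cprob v \<theta> (i-1) (m-1) + 1/2 * Cprob v \<theta> (i+1) (m-1)
         else Cprob v \<theta> (v div 2 - 1) (m-1)) \<and>
      Cprob v \<theta> i m =
        (if i = 1 then \<theta>/2 * Rprob v \<theta> 2 (m-1)
         else if i < v div 2 then (1 - \<theta>/2) * Rprob v \<theta> (i-1) (m-1) + \<theta>/2 * Rprob v \<theta> (i+1) (m-1)
         else Rprob v \<theta> (v div 2 - 1) (m-1))) \<and>
    (odd v \<longrightarrow>
      Rprob v \<theta> i m =
        (if i = 1 then 1/2 * Cprob v \<theta> 2 (m-1)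
         else if i < (v-1) div 2 then 1/2 * Cprob v \<theta> (i-1) (m-1) + 1/2 * Cprob v \<theta> (i+1) (m-1)
         else 1/2 * Cprob v \<theta> ((v-3) div 2) (m-1) + 1/2 * Cprob v \<theta> ((v-1) div 2) (m-1)) \<and>
      Cprob v \<theta> i m =
        (if i = 1 then \<theta>/2 * Rprob v \<theta> 2 (m-1)
         else if i < (v-1) div 2 then (1 - \<theta>/2) * Rprob v \<theta> (i-1) (m-1) + \<theta>/2 * Rprob v \<theta> (i+1) (m-1)
         else (1 - \<theta>/2) * Rprob v \<theta> ((v-3) div 2) (m-1) + \<theta>/2 * Rprob v \<theta> ((v-1) div 2) (m-1)))"
proof -
  note a = assms
  obtain k where m: "m = Suc k" using a(6) by (cases m) auto
  have mk: "m - 1 = k" using m by simp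
  note R = R_step[OF a(1) a(4) a(5), of \<theta> k]
  note C = C_step[OF a(1) a(4) a(5), of \<theta> k]
  have rR: "Rprob v \<theta> (v - d) k = Rprob v \<theta> d k" and rC: "Cprob v \<theta> (v - d) k = Cprob v \<theta> d k"
    if "0 < d" "d < v" for d
    using refl0[OF that] unfolding Rprob_def Cprob_def by auto
  show ?thesis
  proof (intro conjI impI)
    assume ev: "even v"
    show "Rprob v \<theta> i m = (if i = 1 then 1/2 * Cprob v \<theta> 2 (m-1)
         else if i < v div 2 then 1/2 * Cprob v \<theta> (i-1) (m-1) + 1/2 * Cprob v \<theta> (i+1) (m-1)
         else Cprob v \<theta> (v div 2 - 1) (m-1))"
    proof (cases "i = v div 2")
      case True
      have "v - (i + 1) = i - 1" using True ev a(1) by auto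
      hence "Cprob v \<theta> (i + 1) k = Cprob v \<theta> (i - 1) k" using rC[of "i+1"] True a(1) by auto
      thus ?thesis unfolding m R using True a(1) by auto
    qed (unfold mk m R, use a in auto)
    show "Cprob v \<theta> i m = (if i = 1 then \<theta>/2 * Rprob v \<theta> 2 (m-1)
         else if i < v div 2 then (1 - \<theta>/2) * Rprob v \<theta> (i-1) (m-1) + \<theta>/2 * Rprob v \<theta> (i+1) (m-1)
         else Rprob v \<theta> (v div 2 - 1) (m-1))"
    proof (cases "i = v div 2")
      case True
      have "v - (i + 1) = i - 1" using True ev a(1) by auto
      hence "Rprob v \<theta> (i + 1) k = Rprob v \<theta> (i - 1) k" using rR[of "i+1"] True a(1) by auto
      moreover have "2 * i = v" "i \<noteq> 1" using True ev a(1) by auto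
      ultimately show ?thesis unfolding m C using True a(1) by (auto simp: algebra_simps)
    next
      case False
      hence "2 * i \<noteq> v" using a by auto
      note ne = \<open>2 * i \<noteq> v\<close>
      show ?thesis
      proof (cases "i = 1")
        case True
        hence e: "i + 1 = 2" by simp
        show ?thesis unfolding mk unfolding m C e using a ne True by (simp add: algebra_simps)
      qed (use False a ne in \<open>unfold mk m C, auto simp: algebra_simps\<close>)
    qed
  next
    assume od: "odd v"
    have odv: "(v - 1) div 2 = v div 2" "(v - 3) div 2 = v div 2 - 1" using od a(1) by presburger+
    have ne: "2 * i \<noteq> v" using od by auto
    show "Rprob v \<theta> i m = (if i = 1 then 1/2 * Cprob v \<theta> 2 (m-1)
         else if i < (v-1) div 2 then 1/2 * Cprob v \<theta> (i-1) (m-1) + 1/2 * Cprob v \<theta> (i+1) (m-1)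
         else 1/2 * Cprob v \<theta> ((v-3) div 2) (m-1) + 1/2 * Cprob v \<theta> ((v-1) div 2) (m-1))"
    proof (cases "i = v div 2")
      case True
      have "v - (i + 1) = i" using True od a(1) by presburger
      hence "Cprob v \<theta> (i + 1) k = Cprob v \<theta> i k" using rC[of "i+1"] True a(1) by auto
      moreover have "i \<noteq> 1" using True od a(1) by presburger
      ultimately show ?thesis unfolding m R odv using True a(1) by (auto simp: algebra_simps)
    next
      case False
      thus ?thesis unfolding mk odv unfolding m R using a by (auto simp: algebra_simps)
    qed
    show "Cprob v \<theta> i m = (if i = 1 then \<theta>/2 * Rprob v \<theta> 2 (m-1)
         else if i < (v-1) div 2 then (1 - \<theta>/2) * Rprob v \<theta> (i-1) (m-1) + \<theta>/2 * Rprob v \<theta> (i+1) (m-1)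
         else (1 - \<theta>/2) * Rprob v \<theta> ((v-3) div 2) (m-1) + \<theta>/2 * Rprob v \<theta> ((v-1) div 2) (m-1))"
    proof (cases "i = v div 2")
      case True
      have "v - (i + 1) = i" using True od a(1) by presburger
      hence "Rprob v \<theta> (i + 1) k = Rprob v \<theta> i k" using rR[of "i+1"] True a(1) by auto
      moreover have "i \<noteq> 1" using True od a(1) by presburger
      ultimately show ?thesis unfolding m C odv using True a(1) ne by (auto simp: algebra_simps)
    next
      case False
      show ?thesis
      proof (cases "i = 1")
        case True
        hence e: "i + 1 = 2" by simp
        show ?thesis unfolding mk odv unfolding m C e using a ne True by (simp add: algebra_simps)
      qed (use False a ne in \<open>unfold mk odv m C, auto simp: algebra_simps\<close>)
    qed
  qed
qed

end
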